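(* For all integers $n\ge0$: \begin{align*} pl_4(4n+1)&\equiv pl_4(4n+2)+pl_4(4n+3)\pmod 4,\\ pl_4(4n+3)&\equiv 0\pmod 2,\\ pl_8(8n+5)\equiv pl_8(8n+6)&\equiv pl_8(8n+7)\equiv 0\pmod 2. \end{align*}
   Context: For a positive integer $k$, $pl_k(n)$ denotes the number of $k$-component plane partitions of $n$ (plane partitions of $n$ all of whose entries are $\le k$), with $pl_k(0)=1$ and $pl_k(n)=0$ for $n<0$; equivalently $\sum_{n\ge0}pl_k(n)q^n=\prod_{n=1}^{\infty}(1-q^n)^{-\min(k,n)}$. *)

theory Defs
  imports "HOL-Computational_Algebra.Formal_Power_Series" "HOL-Number_Theory.Cong"
begin

text \<open>geo m = 1/(1 - q^m) = sum_{j>=0} q^(m j), as an integer power series (m >= 1).\<close>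
definition geo :: "nat \<Rightarrow> int fps" where
  "geo m = Abs_fps (\<lambda>i. if m dvd i then 1 else 0)"

text \<open>The generating function prod_{m>=1} (1-q^m)^{-min(k,m)}, truncated to the
  factors m <= N. Its coefficients of q^n for n <= N agree with those of the
  full infinite product, since the omitted factors are 1 + O(q^(N+1)).\<close>
definition pl_gf :: "nat \<Rightarrow> nat \<Rightarrow> int fps" where
  "pl_gf k N = (\<Prod>m\<in>{1..N}. geo m ^ min k m)"

definition pl :: "nat \<Rightarrow> int \<Rightarrow> int" where
  "pl k n = (if n < 0 then 0 else fps_nth (pl_gf k (nat n)) (nat n))"


end

theory Submission
  imports Defs "HOL-Computational_Algebra.Polynomial_FPS"
begin
unbundle fps_syntax

definition fcong :: "int \<Rightarrow> int fps \<Rightarrow> int fps \<Rightarrow> bool" where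
  "fcong d f g \<longleftrightarrow> (\<forall>i. [f $ i = g $ i] (mod d))"

lemma fcong_refl: "fcong d f f" by (simp add: fcong_def)
lemma fcong_sym: "fcong d f g \<Longrightarrow> fcong d g f" by (simp add: fcong_def cong_sym)
lemma fcong_trans: "fcong d f g \<Longrightarrow> fcong d g h \<Longrightarrow> fcong d f h"
  unfolding fcong_def using cong_trans by blast
lemma fcong_mult: assumes "fcong d f f'" "fcong d g g'" shows "fcong d (f*g) (f'*g')"
  using assms unfolding fcong_def fps_mult_nth by (intro allI cong_sum cong_mult) auto
lemma fcong_power: "fcong d f g \<Longrightarrow> fcong d (f^n) (g^n)"
  by (induction n) (auto intro: fcong_mult fcong_refl)
lemma fcong_prod: "(\<And>x. x \<in> A \<Longrightarrow> fcong d (f x) (g x)) \<Longrightarrow> fcong d (\<Prod>x\<in>A. f x) (\<Prod>x\<in>A. g x)"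
  by (induction A rule: infinite_finite_induct) (auto intro: fcong_mult fcong_refl)
lemma fcong_diff: assumes "f - g = fps_const d * h" shows "fcong d f g"
  unfolding fcong_def
proof
  fix i
  have "(f - g) $ i = d * h $ i" using assms by simp
  then have "f $ i - g $ i = d * h $ i" by simp
  then show "[f $ i = g $ i] (mod d)" by (simp add: cong_iff_dvd_diff)
qed
lemma fcong_inv: assumes "fcong d (a*u) 1" "fcong d (b*v) 1" "fcong d u v" shows "fcong d a b"
proof -
  have 1: "fcong d (a*1) (a*(b*v))" by (rule fcong_mult[OF fcong_refl fcong_sym[OF assms(2)]])
  have 2: "fcong d (a*(b*v)) (a*(b*u))"
    by (rule fcong_mult[OF fcong_refl fcong_mult[OF fcong_refl fcong_sym[OF assms(3)]]])
  have 3: "fcong d (b*(a*u)) (b*1)" by (rule fcong_mult[OF fcong_refl assms(1)])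
  have "a*(b*u) = b*(a*u)" by (simp add: algebra_simps)
  moreover have "fcong d a (a*(b*u))" using fcong_trans[OF 1 2] by simp
  ultimately have "fcong d a (b*(a*u))" by metis
  then show ?thesis using fcong_trans[OF _ 3] by simp
qed

definition supp :: "nat \<Rightarrow> int fps \<Rightarrow> bool" where
  "supp d f \<longleftrightarrow> (\<forall>i. \<not> d dvd i \<longrightarrow> f $ i = 0)"

lemma supp_mult: assumes "supp d f" "supp d g" shows "supp d (f*g)"
  unfolding supp_def
proof (intro allI impI)
  fix n assume n: "\<not> d dvd n"
  have "f $ i * g $ (n-i) = 0" if "i \<in> {0..n}" for i
  proof -
    have "\<not> d dvd i \<or> \<not> d dvd (n - i)"
    proof (rule ccontr)
      assume "\<not> (\<not> d dvd i \<or> \<not> d dvd (n - i))"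
      then have "d dvd i + (n - i)" by auto
      with that n show False by auto
    qed
    then show ?thesis using assms unfolding supp_def by auto
  qed
  then show "(f*g) $ n = 0" unfolding fps_mult_nth by (intro sum.neutral) simp
qed
lemma supp_1: "supp d 1" by (simp add: supp_def)
lemma supp_power: "supp d f \<Longrightarrow> supp d (f^n)"
  by (induction n) (auto intro: supp_mult supp_1)
lemma supp_prod: "(\<And>x. x \<in> A \<Longrightarrow> supp d (f x)) \<Longrightarrow> supp d (\<Prod>x\<in>A. f x)"
  by (induction A rule: infinite_finite_induct) (auto intro: supp_mult supp_1)
lemma supp_geo: "supp d (geo (d*m))"
  unfolding supp_def geo_def by auto

lemma geo_inv: assumes "m \<ge> 1" shows "geo m * (1 - fps_X^m) = 1"
proof (rule fps_ext)
  fix n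
  have "geo m * (1 - fps_X^m) = geo m - fps_X^m * geo m" by (simp add: algebra_simps)
  then have "(geo m * (1 - fps_X^m)) $ n = geo m $ n - (if n < m then 0 else geo m $ (n - m))"
    by (simp add: fps_X_power_mult_nth)
  also have "\<dots> = (1::int fps) $ n"
  proof (cases "n < m")
    case True
    then have "m dvd n \<longleftrightarrow> n = 0" using assms by (auto dest: dvd_imp_le)
    then show ?thesis using True by (simp add: geo_def)
  next
    case False
    then have "m dvd (n - m) \<longleftrightarrow> m dvd n" by (simp add: dvd_minus_self)
    then show ?thesis using False assms by (simp add: geo_def)
  qed
  finally show "(geo m * (1 - fps_X^m)) $ n = (1::int fps) $ n" .
qed

lemma fcong_diff': "f - g = numeral d * h \<Longrightarrow> fcong (numeral d) f g"
  by (rule fcong_diff) (simp add: numeral_fps_const)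

lemma geo_pow_inv: "m \<ge> 1 \<Longrightarrow> geo m ^ e * (1 - fps_X^m) ^ e = 1"
  by (simp add: power_mult_distrib[symmetric] geo_inv)

lemma geo_sq2: assumes "m \<ge> 1" shows "fcong 2 (geo m ^ 2) (geo (2*m))"
proof (rule fcong_inv[where u = "(1 - fps_X^m)^2" and v = "1 - fps_X^(2*m)"])
  show "fcong 2 (geo m ^ 2 * (1 - fps_X ^ m) ^ 2) 1" using geo_pow_inv[OF assms] by (simp add: fcong_refl)
  show "fcong 2 (geo (2 * m) * (1 - fps_X ^ (2 * m))) 1" using geo_inv[of "2*m"] assms by (simp add: fcong_refl)
  have e: "(fps_X::int fps) ^ (2*m) = (fps_X^m)^2" by (simp add: power_mult[symmetric] mult.commute)
  have "(1 - y)^2 - (1 - y^2) = 2 * (y^2 - y)" for y :: "int fps" by algebra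
  then show "fcong 2 ((1 - fps_X ^ m) ^ 2) (1 - fps_X ^ (2 * m))" unfolding e by (intro fcong_diff') 
qed

lemma geo_4_mod4: assumes "m \<ge> 1" shows "fcong 4 (geo m ^ 4) (geo (2*m) ^ 2)"
proof (rule fcong_inv[where u = "(1 - fps_X^m)^4" and v = "(1 - fps_X^(2*m))^2"])
  show "fcong 4 (geo m ^ 4 * (1 - fps_X ^ m) ^ 4) 1" using geo_pow_inv[OF assms] by (simp add: fcong_refl)
  show "fcong 4 (geo (2 * m)^2 * (1 - fps_X ^ (2 * m))^2) 1" using geo_pow_inv[of "2*m"] assms by (simp add: fcong_refl)
  have e: "(fps_X::int fps) ^ (2*m) = (fps_X^m)^2" by (simp add: power_mult[symmetric] mult.commute)
  have "(1 - y)^4 - (1 - y^2)^2 = 4 * (2*y^2 - y - y^3)" for y :: "int fps" by algebra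
  then show "fcong 4 ((1 - fps_X ^ m) ^ 4) ((1 - fps_X ^ (2 * m))^2)" unfolding e by (intro fcong_diff') 
qed

lemma geo_4_mod2: assumes "m \<ge> 1" shows "fcong 2 (geo m ^ 4) (geo (4*m))"
proof -
  have "fcong 2 ((geo m ^ 2)^2) (geo (2*m) ^ 2)" by (rule fcong_power[OF geo_sq2[OF assms]])
  moreover have "fcong 2 (geo (2*m) ^ 2) (geo (2*(2*m)))" by (rule geo_sq2) (use assms in auto)
  ultimately show ?thesis by (simp add: power_mult[symmetric] fcong_trans[of 2 _ "geo (2*m) ^ 2"])
qed

lemma geo_8_mod2: assumes "m \<ge> 1" shows "fcong 2 (geo m ^ 8) (geo (8*m))"
proof -
  have "fcong 2 ((geo m ^ 4)^2) (geo (4*m) ^ 2)" by (rule fcong_power[OF geo_4_mod2[OF assms]])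
  moreover have "fcong 2 (geo (4*m) ^ 2) (geo (2*(4*m)))" by (rule geo_sq2) (use assms in auto)
  ultimately show ?thesis by (simp add: power_mult[symmetric] fcong_trans[of 2 _ "geo (4*m) ^ 2"])
qed

definition low :: "nat \<Rightarrow> int fps \<Rightarrow> bool" where
  "low m g \<longleftrightarrow> (\<forall>j<m. g $ j = (1::int fps) $ j)"

lemma mult_low: assumes "low m g" "j < m" shows "(f * g) $ j = f $ j"
proof -
  have "(f * g) $ j = (\<Sum>i=0..j. f $ i * g $ (j - i))" by (rule fps_mult_nth)
  also have "\<dots> = (\<Sum>i=0..j. if i = j then f $ i else 0)"
  proof (rule sum.cong)
    fix i assume "i \<in> {0..j}"
    then have "j - i < m" using assms(2) by auto
    then show "f $ i * g $ (j - i) = (if i = j then f $ i else 0)"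
      using assms(1) \<open>i \<in> {0..j}\<close> unfolding low_def by auto
  qed simp
  also have "\<dots> = f $ j" by simp
  finally show ?thesis .
qed

lemma low_mult: "low m f \<Longrightarrow> low m g \<Longrightarrow> low m (f * g)"
  using mult_low unfolding low_def by simp
lemma low_power: assumes "low m f" shows "low m (f ^ e)"
proof (induction e)
  case 0 show ?case by (simp add: low_def)
next
  case (Suc e) show ?case using low_mult[OF assms Suc] by simp
qed
lemma low_geo: "low m (geo m)"
  unfolding low_def geo_def by (auto dest: dvd_imp_le)

lemma trunc: "j \<le> N \<Longrightarrow> pl_gf k (N + d) $ j = pl_gf k N $ j"
proof (induction d)
  case 0 then show ?case by simp
next
  case (Suc d)
  have "pl_gf k (N + Suc d) = pl_gf k (N + d) * geo (Suc (N + d)) ^ min k (Suc (N+d))"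
    unfolding pl_gf_def by simp
  moreover have "low (Suc (N + d)) (geo (Suc (N + d)) ^ min k (Suc (N+d)))"
    by (intro low_power low_geo)
  ultimately show ?case using Suc mult_low[of "Suc (N + d)" _ j] by simp
qed

lemma trunc': "j \<le> N \<Longrightarrow> N \<le> M \<Longrightarrow> pl_gf k M $ j = pl_gf k N $ j"
  using trunc[of j N k "M - N"] by simp

lemma pl_nat: "pl k (int i) = pl_gf k i $ i"
  unfolding pl_def by simp


definition Pk :: "nat \<Rightarrow> int poly" where "Pk k = (\<Prod>m\<in>{1..<k}. (1 - monom 1 m)^(k-m))"
definition Q :: "nat \<Rightarrow> nat \<Rightarrow> int fps" where "Q k N = (\<Prod>m\<in>{1..N}. geo m ^ k)"

lemma decomp: assumes "k \<le> Suc N" shows "pl_gf k N = fps_of_poly (Pk k) * Q k N"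
proof -
  have "fps_of_poly (Pk k) = (\<Prod>m\<in>{1..<k}. (1 - fps_X^m)^(k-m))"
    unfolding Pk_def by (simp add: fps_of_poly_prod fps_of_poly_power fps_of_poly_diff fps_of_poly_monom')
  also have "\<dots> = (\<Prod>m\<in>{1..N}. if m < k then (1 - fps_X^m)^(k-m) else 1)"
    by (rule prod.mono_neutral_cong_left) (use assms in auto)
  finally have "fps_of_poly (Pk k) * Q k N = (\<Prod>m\<in>{1..N}. (if m < k then (1 - fps_X^m)^(k-m) else 1) * geo m ^ k)"
    unfolding Q_def prod.distrib by simp
  also have "\<dots> = pl_gf k N" unfolding pl_gf_def
  proof (rule prod.cong)
    fix m assume m: "m \<in> {1..N}"
    show "(if m < k then (1 - fps_X^m)^(k-m) else 1) * geo m ^ k = geo m ^ min k m"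
    proof (cases "m < k")
      case True
      have "geo m ^ k = geo m^(k-m) * geo m^m" using True by (simp add: power_add[symmetric])
      then have "(1 - fps_X^m)^(k-m) * geo m ^ k = (geo m^(k-m) * (1 - fps_X^m)^(k-m)) * geo m^m"
        by (simp add: algebra_simps)
      also have "\<dots> = geo m ^ m" using geo_pow_inv[of m "k-m"] m by simp
      finally show ?thesis using True by simp
    qed simp
  qed simp
  finally show ?thesis by simp
qed

lemma Q4_mod2: "fcong 2 (Q 4 N) (\<Prod>m\<in>{1..N}. geo (4*m))"
  unfolding Q_def by (rule fcong_prod, rule geo_4_mod2) auto
lemma Q4_mod4: "fcong 4 (Q 4 N) (\<Prod>m\<in>{1..N}. geo (2*m) ^ 2)"
  unfolding Q_def by (rule fcong_prod, rule geo_4_mod4) auto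
lemma Q8_mod2: "fcong 2 (Q 8 N) (\<Prod>m\<in>{1..N}. geo (8*m))"
  unfolding Q_def by (rule fcong_prod, rule geo_8_mod2) auto
lemma supp_T: "supp d (\<Prod>m\<in>A. geo (d*m))"
  by (intro supp_prod supp_geo)
lemma supp_R: "supp 2 (\<Prod>m\<in>A. geo (2*m) ^ 2)"
  by (intro supp_prod supp_power supp_geo)

lemma final2:
  assumes "fcong 2 g T" "supp d T" "\<forall>i. i mod d = r \<longrightarrow> even (f $ i)" "i mod d = r"
  shows "even ((f*g) $ i)"
proof -
  have c: "[(f*g) $ i = (f*T) $ i] (mod 2)" using fcong_mult[OF fcong_refl assms(1)] unfolding fcong_def by blast
  have "even (f $ j * T $ (i - j))" if "j \<in> {0..i}" for j
  proof (cases "d dvd (i - j)")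
    case True
    then obtain q where q: "i - j = d*q" ..
    then have "i = j + d*q" using that by auto
    then have "j mod d = r" using assms(4) by simp
    then show ?thesis using assms(3) by simp
  next
    case False
    then show ?thesis using assms(2) unfolding supp_def by simp
  qed
  then have "even ((f*T) $ i)" unfolding fps_mult_nth by (intro dvd_sum) simp
  then show ?thesis using c unfolding cong_def by (simp add: even_iff_mod_2_eq_zero)
qed

definition L8 :: "int list" where "L8 = [1, -7, 15, 2, -45, 34, 26, 10, -51, -76, 126, -31, 33, 46, -132, 0, -41, 95, 16, 36, 101, -66, -286, -24, 256, -121, 226, -3, 24, -32, -402, 98, -102, 207, 401, -77, -170, -2, -230, -64, -6, -25, 480, -25, -6, -64, -230, -2, -170, -77, 401, 207, -102, 98, -402, -32, 24, -3, 226, -121, 256, -24, -286, -66, 101, 36, 16, 95, -41, 0, -132, 46, 33, -31, 126, -76, -51, 10, 26, 34, -45, 2, 15, -7, 1]"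

lemma P8_coeffs: "coeffs ((1 - monom (1::int) 1)^7 * (1 - monom 1 2)^6 * (1 - monom 1 3)^5 * (1 - monom 1 4)^4 * (1 - monom 1 5)^3 * (1 - monom 1 6)^2 * (1 - monom 1 7)) = L8"
  by code_simp

lemma Pk8: "Pk 8 = (1 - monom (1::int) 1)^7 * (1 - monom 1 2)^6 * (1 - monom 1 3)^5 * (1 - monom 1 4)^4 * (1 - monom 1 5)^3 * (1 - monom 1 6)^2 * (1 - monom 1 7)"
  unfolding Pk_def by (simp add: eval_nat_numeral atLeastLessThanSuc mult_ac)

lemma L8_check: "list_all (\<lambda>i. i mod 8 < 5 \<or> even (L8 ! i)) [0..<length L8]"
  by code_simp

lemma P8_even: assumes "5 \<le> i mod 8" shows "even (coeff (Pk 8) i)"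
proof -
  have "coeff (Pk 8) i = nth_default 0 L8 i"
    using P8_coeffs Pk8 by (metis nth_default_coeffs_eq)
  moreover have "i < length L8 \<Longrightarrow> i mod 8 < 5 \<or> even (L8 ! i)"
    using L8_check by (simp add: list_all_iff)
  ultimately show ?thesis using assms unfolding nth_default_def by auto
qed

definition P4' :: "int poly" where "P4' = (1 + monom 1 1 + monom 1 2) * (1 + monom 1 4)^2"

lemma Pk4: "Pk 4 = (1 - monom (1::int) 1)^3 * (1 - monom 1 2)^2 * (1 - monom 1 3)"
  unfolding Pk_def by (simp add: eval_nat_numeral atLeastLessThanSuc mult_ac)

lemma P4_check: "list_all (\<lambda>i. (coeff ((1 - monom (1::int) 1)^3 * (1 - monom 1 2)^2 * (1 - monom 1 3)) i - coeff P4' i) mod 4 = 0 \<and> (i mod 4 \<noteq> 3 \<or> even (coeff ((1 - monom (1::int) 1)^3 * (1 - monom 1 2)^2 * (1 - monom 1 3)) i))) [0..<11] \<and> degree ((1 - monom (1::int) 1)^3 * (1 - monom 1 2)^2 * (1 - monom 1 3)) \<le> 10 \<and> degree P4' \<le> 10"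
  unfolding P4'_def by code_simp

lemma P4_facts: "[coeff (Pk 4) i = coeff P4' i] (mod 4)" "i mod 4 = 3 \<Longrightarrow> even (coeff (Pk 4) i)"
proof -
  have "(i < 11 \<longrightarrow> (coeff (Pk 4) i - coeff P4' i) mod 4 = 0 \<and> (i mod 4 \<noteq> 3 \<or> even (coeff (Pk 4) i)))
     \<and> degree (Pk 4) \<le> 10 \<and> degree P4' \<le> 10"
    using P4_check unfolding Pk4 list_all_iff by auto
  moreover have "i \<ge> 11 \<Longrightarrow> degree p \<le> 10 \<Longrightarrow> coeff p i = 0" for p :: "int poly"
    by (rule coeff_eq_0) simp
  ultimately have "(coeff (Pk 4) i - coeff P4' i) mod 4 = 0 \<and> (i mod 4 \<noteq> 3 \<or> even (coeff (Pk 4) i))"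
    by (cases "i < 11") auto
  then show "[coeff (Pk 4) i = coeff P4' i] (mod 4)" "i mod 4 = 3 \<Longrightarrow> even (coeff (Pk 4) i)"
    by (auto simp: cong_iff_dvd_diff mod_eq_0_iff_dvd)
qed

lemma fps_P4': "fps_of_poly P4' = (1 + fps_X + fps_X^2) * (1 + fps_X^4)^2"
  unfolding P4'_def by (simp add: fps_of_poly_mult fps_of_poly_add fps_of_poly_power fps_of_poly_monom')


lemma supp_F: assumes "d dvd 4" shows "supp d ((1 + fps_X^4)^2)"
proof -
  have "supp d (1 + fps_X^4)" unfolding supp_def
  proof (intro allI impI)
    fix i assume "\<not> d dvd i"
    then have "i \<noteq> 0" by (metis dvd_0_right)
    moreover have "i \<noteq> 4" using assms \<open>\<not> d dvd i\<close> by metis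
    ultimately show "(1 + fps_X^4 :: int fps) $ i = 0" by simp
  qed
  then show ?thesis by (rule supp_power)
qed

lemma mod4_main:
  fixes j :: nat
  defines "G \<equiv> pl_gf 4 (4*j+3)"
  shows "[G $ (4*j+1) = G $ (4*j+2) + G $ (4*j+3)] (mod 4)"
proof -
  define F :: "int fps" where "F = (1 + fps_X^4)^2"
  define E :: "int fps" where "E = 1 + fps_X + fps_X^2"
  define W where "W = F * Q 4 (4*j+3)"
  have G: "G = fps_of_poly (Pk 4) * Q 4 (4*j+3)" unfolding G_def by (rule decomp) simp
  have fP: "fcong 4 (fps_of_poly (Pk 4)) (fps_of_poly P4')"
    unfolding fcong_def using P4_facts(1) by simp
  have "fcong 4 G (fps_of_poly P4' * Q 4 (4*j+3))"
    unfolding G by (rule fcong_mult[OF fP fcong_refl])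
  moreover have "fps_of_poly P4' * Q 4 (4*j+3) = E * W"
    unfolding fps_P4' E_def W_def F_def by (simp add: mult_ac)
  ultimately have GW: "[G $ i = (E * W) $ i] (mod 4)" for i unfolding fcong_def by simp
  have EW: "(E * W) $ k = W $ k + (if k = 0 then 0 else W $ (k - 1)) + (if k < 2 then 0 else W $ (k - 2))" for k
  proof -
    have "E * W = W + fps_X * W + fps_X^2 * W" unfolding E_def by (simp add: algebra_simps)
    then show ?thesis by (simp add: fps_X_power_mult_nth)
  qed
  have Wodd: "4 dvd W $ i" if "odd i" for i
  proof -
    have "fcong 4 W (F * (\<Prod>m\<in>{1..4*j+3}. geo (2*m) ^ 2))"
      unfolding W_def by (rule fcong_mult[OF fcong_refl Q4_mod4])
    moreover have "supp 2 (F * (\<Prod>m\<in>{1..4*j+3}. geo (2*m) ^ 2))"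
      unfolding F_def by (intro supp_mult supp_F supp_R) simp
    ultimately show ?thesis using that unfolding fcong_def supp_def
      by (metis cong_0_iff)
  qed
  have W2: "even (W $ (4*j+2))"
    unfolding W_def
  proof (rule final2[OF Q4_mod2 supp_T, where r = 2])
    show "\<forall>i. i mod 4 = 2 \<longrightarrow> even (F $ i)"
    proof (intro allI impI)
      fix i :: nat assume "i mod 4 = 2"
      then have "\<not> 4 dvd i" by (simp add: dvd_eq_mod_eq_0)
      then show "even (F $ i)" using supp_F[of 4] unfolding F_def supp_def by simp
    qed
  qed presburger
  have z: "4 dvd (if 4*j+1 < 2 then 0 else W $ (4*j+1-2))"
    using Wodd[of "4*j+1-2"] by auto
  have b: "4 dvd W $ (4*j+1)" by (rule Wodd) simp
  have d: "4 dvd W $ (4*j+3)" by (rule Wodd) simp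
  have c1: "[G $ (4*j+1) = W $ (4*j+1) + W $ (4*j) + (if 4*j+1 < 2 then 0 else W $ (4*j+1-2))] (mod 4)"
    using GW[of "4*j+1"] EW[of "4*j+1"] by simp
  have c2: "[G $ (4*j+2) = W $ (4*j+2) + W $ (4*j+1) + W $ (4*j)] (mod 4)"
    using GW[of "4*j+2"] EW[of "4*j+2"] by simp
  have c3: "[G $ (4*j+3) = W $ (4*j+3) + W $ (4*j+2) + W $ (4*j+1)] (mod 4)"
    using GW[of "4*j+3"] EW[of "4*j+3"] by (simp add: numeral_eq_Suc)
  show ?thesis using c1 c2 c3 z b d W2 unfolding cong_iff_dvd_diff
    by presburger
qed

lemma mod2_4: "even (pl_gf 4 (4*j+3) $ (4*j+3))"
proof -
  have "pl_gf 4 (4*j+3) = fps_of_poly (Pk 4) * Q 4 (4*j+3)" by (rule decomp) simp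
  moreover have "even ((fps_of_poly (Pk 4) * Q 4 (4*j+3)) $ (4*j+3))"
    by (rule final2[OF Q4_mod2 supp_T, where r = 3]) (auto intro: P4_facts(2))
  ultimately show ?thesis by simp
qed

lemma mod2_8: assumes "r \<in> {5,6,7}" shows "even (pl_gf 8 (8*j+7) $ (8*j+r))"
proof -
  have "pl_gf 8 (8*j+7) = fps_of_poly (Pk 8) * Q 8 (8*j+7)" by (rule decomp) simp
  moreover have "even ((fps_of_poly (Pk 8) * Q 8 (8*j+7)) $ (8*j+r))"
  proof (rule final2[OF Q8_mod2 supp_T, where r = r])
    show "\<forall>i. i mod 8 = r \<longrightarrow> even (fps_of_poly (Pk 8) $ i)"
      using assms P8_even by auto
  qed (use assms in auto)
  ultimately show ?thesis by simp
qed

theorem theorem3: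
  fixes n :: int
  assumes "n \<ge> 0"
  shows "[pl 4 (4*n+1) = pl 4 (4*n+2) + pl 4 (4*n+3)] (mod 4) \<and>
         [pl 4 (4*n+3) = 0] (mod 2) \<and>
         [pl 8 (8*n+5) = 0] (mod 2) \<and>
         [pl 8 (8*n+6) = 0] (mod 2) \<and>
         [pl 8 (8*n+7) = 0] (mod 2)"
proof -
  obtain j where n: "n = int j" using assms nonneg_int_cases by blast
  have e4: "4*n + int r = int (4*j+r)" "8*n + int r = int (8*j+r)" for r unfolding n by simp_all
  have p4: "pl 4 (4*n + int r) = pl_gf 4 (4*j+3) $ (4*j+r)" if "r \<le> 3" for r
    unfolding e4 pl_nat using that by (intro trunc'[symmetric]) auto
  have p8: "pl 8 (8*n + int r) = pl_gf 8 (8*j+7) $ (8*j+r)" if "r \<le> 7" for r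
    unfolding e4 pl_nat using that by (intro trunc'[symmetric]) auto
  have a1: "pl 4 (4*n+1) = pl_gf 4 (4*j+3) $ (4*j+1)" using p4[of 1] by simp
  have a2: "pl 4 (4*n+2) = pl_gf 4 (4*j+3) $ (4*j+2)" using p4[of 2] by simp
  have a3: "pl 4 (4*n+3) = pl_gf 4 (4*j+3) $ (4*j+3)" using p4[of 3] by simp
  have b5: "pl 8 (8*n+5) = pl_gf 8 (8*j+7) $ (8*j+5)" using p8[of 5] by simp
  have b6: "pl 8 (8*n+6) = pl_gf 8 (8*j+7) $ (8*j+6)" using p8[of 6] by simp
  have b7: "pl 8 (8*n+7) = pl_gf 8 (8*j+7) $ (8*j+7)" using p8[of 7] by simp
  show ?thesis unfolding a1 a2 a3 b5 b6 b7
    using mod4_main[of j] mod2_4[of j] mod2_8[of 5 j] mod2_8[of 6 j] mod2_8[of 7 j]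
    by (simp add: cong_0_iff)
qed


end
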